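(* Let $Y$ be the colimit of a sequence $Y_1\subset Y_2\subset\cdots$ of spaces. Assume that each $Y_n$ is paracompact and closed in $Y$, that each $Y_n\subset Y_{n+1}$ is a neighbourhood retract, and that each $Y_{n+1}\setminus Y_n$ is paracompact and Hausdorff. Then $Y$ is paracompact.
   Context: A space is called paracompact if every open cover admits a subordinate locally finite partition of unity. *)

theory Defs
  imports "HOL-Analysis.Analysis"
begin

text \<open>A (locally finite) partition of unity on X, given as a set of real-valued
functions (an indexed family with repetitions can always be collapsed by summing).\<close>
definition locally_finite_partition_of_unity :: "'a topology \<Rightarrow> ('a \<Rightarrow> real) set \<Rightarrow> bool" where
  "locally_finite_partition_of_unity X F \<longleftrightarrow>
     (\<forall>f\<in>F. continuous_map X euclideanreal f \<and> (\<forall>x\<in>topspace X. 0 \<le> f x)) \<and>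
     (\<forall>x\<in>topspace X. \<exists>V. openin X V \<and> x \<in> V \<and>
          finite {f\<in>F. \<exists>y\<in>V. f y \<noteq> 0}) \<and>
     (\<forall>x\<in>topspace X. (\<Sum>f\<in>{f\<in>F. f x \<noteq> 0}. f x) = 1)"

definition subordinate_to :: "'a topology \<Rightarrow> ('a \<Rightarrow> real) set \<Rightarrow> 'a set set \<Rightarrow> bool" where
  "subordinate_to X F \<U> \<longleftrightarrow>
     (\<forall>f\<in>F. \<exists>U\<in>\<U>. X closure_of {x\<in>topspace X. f x \<noteq> 0} \<subseteq> U)"

definition paracompact_space :: "'a topology \<Rightarrow> bool" where
  "paracompact_space X \<longleftrightarrow>
     (\<forall>\<U>. (\<forall>U\<in>\<U>. openin X U) \<and> \<Union>\<U> = topspace X \<longrightarrow>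
        (\<exists>F. locally_finite_partition_of_unity X F \<and> subordinate_to X F \<U>))"

definition neighbourhood_retract :: "'a set \<Rightarrow> 'a topology \<Rightarrow> bool" where
  "neighbourhood_retract S X \<longleftrightarrow>
     (\<exists>U. openin X U \<and> S \<subseteq> U \<and> S retract_of_space (subtopology X U))"

definition is_sequential_colimit :: "'a topology \<Rightarrow> (nat \<Rightarrow> 'a set) \<Rightarrow> bool" where
  "is_sequential_colimit Y S \<longleftrightarrow>
     (\<forall>n. S n \<subseteq> S (Suc n)) \<and> topspace Y = (\<Union>n. S n) \<and>
     (\<forall>U. U \<subseteq> topspace Y \<and> (\<forall>n. openin (subtopology Y (S n)) (U \<inter> S n)) \<longrightarrow> openin Y U)"

end

theory Submission
  imports Defs
begin

lemma cont_local:
  assumes "\<And>x. x \<in> topspace X \<Longrightarrow> \<exists>V. openin X V \<and> x \<in> V \<and> continuous_map (subtopology X V) euclideanreal f"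
  shows "continuous_map X euclideanreal f"
proof -
  have "openin X {x\<in>topspace X. f x \<in> Q}" if "open Q" for Q
  proof (subst openin_subopen, intro ballI)
    fix x assume x: "x \<in> {x\<in>topspace X. f x \<in> Q}"
    then obtain V where V: "openin X V" "x \<in> V" "continuous_map (subtopology X V) euclideanreal f"
      using assms by blast
    have "openin (subtopology X V) {y\<in>topspace (subtopology X V). f y \<in> Q}"
      using openin_continuous_map_preimage[OF V(3)] that by simp
    then obtain T where T: "openin X T" "{y\<in>topspace (subtopology X V). f y \<in> Q} = T \<inter> V"
      by (auto simp: openin_subtopology)
    show "\<exists>T. openin X T \<and> x \<in> T \<and> T \<subseteq> {x \<in> topspace X. f x \<in> Q}"
      apply (rule exI[of _ "T \<inter> V"])
      using T V x openin_subset[OF V(1)] by (auto simp: topspace_subtopology)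
  qed
  then show ?thesis by (simp add: continuous_map_def)
qed

lemma lf_sum:
  assumes cont: "\<And>i. i\<in>I \<Longrightarrow> continuous_map X euclideanreal (f i)"
  and lf: "\<And>x. x\<in>topspace X \<Longrightarrow> \<exists>V. openin X V \<and> x\<in>V \<and> finite {i\<in>I. \<exists>y\<in>V. f i y \<noteq> 0}"
  shows "continuous_map X euclideanreal (\<lambda>x. \<Sum>i\<in>{i\<in>I. f i x \<noteq> 0}. f i x)"
   and "X closure_of {x\<in>topspace X. (\<Sum>i\<in>{i\<in>I. f i x \<noteq> 0}. f i x) \<noteq> 0}
         \<subseteq> (\<Union>i\<in>I. X closure_of {x\<in>topspace X. f i x \<noteq> 0})"
proof -
  show "continuous_map X euclideanreal (\<lambda>x. \<Sum>i\<in>{i\<in>I. f i x \<noteq> 0}. f i x)"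
  proof (rule cont_local)
    fix x assume "x \<in> topspace X"
    then obtain V where V: "openin X V" "x\<in>V" "finite {i\<in>I. \<exists>y\<in>V. f i y \<noteq> 0}"
      using lf by blast
    define G where "G = {i\<in>I. \<exists>y\<in>V. f i y \<noteq> 0}"
    have eq: "(\<Sum>i\<in>{i\<in>I. f i y \<noteq> 0}. f i y) = (\<Sum>i\<in>G. f i y)" if "y \<in> V" for y
      by (rule sum.mono_neutral_left) (use V that in \<open>auto simp: G_def\<close>)
    have "continuous_map X euclideanreal (\<lambda>y. \<Sum>i\<in>G. f i y)"
      by (rule continuous_map_sum) (use V cont in \<open>auto simp: G_def\<close>)
    then have "continuous_map (subtopology X V) euclideanreal (\<lambda>y. \<Sum>i\<in>G. f i y)"
      by (rule continuous_map_from_subtopology)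
    then have "continuous_map (subtopology X V) euclideanreal (\<lambda>x. \<Sum>i\<in>{i\<in>I. f i x \<noteq> 0}. f i x)"
      by (rule continuous_map_eq) (use eq in \<open>auto simp: topspace_subtopology\<close>)
    then show "\<exists>V. openin X V \<and> x \<in> V \<and> continuous_map (subtopology X V) euclideanreal (\<lambda>x. \<Sum>i\<in>{i\<in>I. f i x \<noteq> 0}. f i x)"
      using V by blast
  qed
  show "X closure_of {x\<in>topspace X. (\<Sum>i\<in>{i\<in>I. f i x \<noteq> 0}. f i x) \<noteq> 0}
         \<subseteq> (\<Union>i\<in>I. X closure_of {x\<in>topspace X. f i x \<noteq> 0})"
  proof
    fix z assume z: "z \<in> X closure_of {x\<in>topspace X. (\<Sum>i\<in>{i\<in>I. f i x \<noteq> 0}. f i x) \<noteq> 0}"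
    show "z \<in> (\<Union>i\<in>I. X closure_of {x\<in>topspace X. f i x \<noteq> 0})"
    proof (rule ccontr)
      assume nz: "z \<notin> (\<Union>i\<in>I. X closure_of {x\<in>topspace X. f i x \<noteq> 0})"
      have zt: "z \<in> topspace X" using z in_closure_of by fastforce
      then obtain V where V: "openin X V" "z\<in>V" "finite {i\<in>I. \<exists>y\<in>V. f i y \<noteq> 0}"
        using lf by blast
      define G where "G = {i\<in>I. \<exists>y\<in>V. f i y \<noteq> 0}"
      define T where "T = V - (\<Union>i\<in>G. X closure_of {x\<in>topspace X. f i x \<noteq> 0})"
      have "closedin X (\<Union>i\<in>G. X closure_of {x\<in>topspace X. f i x \<noteq> 0})"
        using V(3) unfolding G_def by (intro closedin_Union) auto
      then have "openin X T" unfolding T_def using V(1) by (rule openin_diff[rotated])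
      moreover have "z \<in> T" using nz V(2) by (auto simp: T_def G_def)
      ultimately obtain y where y: "y \<in> topspace X" "(\<Sum>i\<in>{i\<in>I. f i y \<noteq> 0}. f i y) \<noteq> 0" "y \<in> T"
        using z unfolding in_closure_of by blast
      then obtain i where i: "i \<in> I" "f i y \<noteq> 0"
        by (metis (mono_tags, lifting) empty_iff mem_Collect_eq sum.neutral)
      then have "i \<in> G" using y(3) by (auto simp: T_def G_def)
      moreover have "y \<in> X closure_of {x\<in>topspace X. f i x \<noteq> 0}"
        using closure_of_subset[of "{x\<in>topspace X. f i x \<noteq> 0}" X] y i by auto
      ultimately show False using y(3) by (auto simp: T_def)
    qed
  qed
qed

definition ipou :: "'a topology \<Rightarrow> 'j set \<Rightarrow> ('j \<Rightarrow> 'a \<Rightarrow> real) \<Rightarrow> bool" where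
  "ipou X J \<phi> \<longleftrightarrow>
     (\<forall>j\<in>J. continuous_map X euclideanreal (\<phi> j) \<and> (\<forall>x\<in>topspace X. 0 \<le> \<phi> j x)) \<and>
     (\<forall>x\<in>topspace X. \<exists>V. openin X V \<and> x \<in> V \<and> finite {j\<in>J. \<exists>y\<in>V. \<phi> j y \<noteq> 0}) \<and>
     (\<forall>x\<in>topspace X. (\<Sum>j\<in>{j\<in>J. \<phi> j x \<noteq> 0}. \<phi> j x) = 1)"

definition isub :: "'a topology \<Rightarrow> 'j set \<Rightarrow> ('j \<Rightarrow> 'a \<Rightarrow> real) \<Rightarrow> ('j \<Rightarrow> 'a set) \<Rightarrow> bool" where
  "isub X J \<phi> U \<longleftrightarrow> (\<forall>j\<in>J. X closure_of {x\<in>topspace X. \<phi> j x \<noteq> 0} \<subseteq> U j)"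

lemma para_indexed:
  assumes para: "paracompact_space X"
    and opn: "\<And>j. j\<in>J \<Longrightarrow> openin X (U j \<inter> topspace X)"
    and cov: "topspace X \<subseteq> (\<Union>j\<in>J. U j)"
  shows "\<exists>\<phi>. ipou X J \<phi> \<and> isub X J \<phi> U"
proof -
  define \<V> where "\<V> = (\<lambda>j. U j \<inter> topspace X) ` J"
  have VV: "(\<forall>V\<in>\<V>. openin X V) \<and> \<Union>\<V> = topspace X"
    using opn cov by (auto simp: \<V>_def)
  obtain F where F: "locally_finite_partition_of_unity X F" "subordinate_to X F \<V>"
    using para[unfolded paracompact_space_def, rule_format, OF VV] by blast
  note F1 = F(1)[unfolded locally_finite_partition_of_unity_def]
  have Fc: "\<And>f. f\<in>F \<Longrightarrow> continuous_map X euclideanreal f \<and> (\<forall>x\<in>topspace X. 0 \<le> f x)"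
    using F1 by simp
  have Flf: "\<And>x. x\<in>topspace X \<Longrightarrow> \<exists>V. openin X V \<and> x \<in> V \<and> finite {f\<in>F. \<exists>y\<in>V. f y \<noteq> 0}"
    using F1 by simp
  have Fs: "\<And>x. x\<in>topspace X \<Longrightarrow> (\<Sum>f\<in>{f\<in>F. f x \<noteq> 0}. f x) = 1"
    using F1 by simp
  have "\<forall>f\<in>F. \<exists>j. j \<in> J \<and> X closure_of {x\<in>topspace X. f x \<noteq> 0} \<subseteq> U j"
    using F(2) unfolding subordinate_to_def \<V>_def by blast
  then have "\<exists>c. \<forall>f\<in>F. c f \<in> J \<and> X closure_of {x\<in>topspace X. f x \<noteq> 0} \<subseteq> U (c f)"
    by (rule bchoice)
  then obtain c where c: "\<And>f. f\<in>F \<Longrightarrow> c f \<in> J \<and> X closure_of {x\<in>topspace X. f x \<noteq> 0} \<subseteq> U (c f)"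
    by blast
  define \<phi> where "\<phi> j x = (\<Sum>f\<in>{f\<in>{f\<in>F. c f = j}. f x \<noteq> 0}. f x)" for j x
  have lfj: "\<exists>V. openin X V \<and> x\<in>V \<and> finite {f\<in>{f\<in>F. c f = j}. \<exists>y\<in>V. f y \<noteq> 0}"
    if x: "x \<in> topspace X" for x j
  proof -
    obtain V where V: "openin X V" "x \<in> V" "finite {f\<in>F. \<exists>y\<in>V. f y \<noteq> 0}" using Flf[OF x] by blast
    have "finite {f\<in>{f\<in>F. c f = j}. \<exists>y\<in>V. f y \<noteq> 0}" by (rule finite_subset[OF _ V(3)]) blast
    then show ?thesis using V by blast
  qed
  have cont: "continuous_map X euclideanreal (\<phi> j)" for j
    unfolding \<phi>_def[abs_def]
    using lf_sum(1)[of "{f\<in>F. c f = j}" X "\<lambda>f. f"] Fc lfj by auto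
  have clo: "X closure_of {x\<in>topspace X. \<phi> j x \<noteq> 0} \<subseteq> U j" if "j \<in> J" for j
  proof -
    have "X closure_of {x\<in>topspace X. \<phi> j x \<noteq> 0} \<subseteq> (\<Union>f\<in>{f\<in>F. c f = j}. X closure_of {x\<in>topspace X. f x \<noteq> 0})"
      unfolding \<phi>_def
      using lf_sum(2)[of "{f\<in>F. c f = j}" X "\<lambda>f. f"] Fc lfj by auto
    also have "\<dots> \<subseteq> U j" using c by auto
    finally show ?thesis .
  qed
  have nn: "0 \<le> \<phi> j x" if "x \<in> topspace X" for j x
    unfolding \<phi>_def using Fc that by (auto intro: sum_nonneg)
  have nz: "\<exists>f\<in>F. c f = j \<and> f y \<noteq> 0" if "\<phi> j y \<noteq> 0" for j y
  proof (rule ccontr)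
    assume "\<not> (\<exists>f\<in>F. c f = j \<and> f y \<noteq> 0)"
    then have "{f\<in>{f\<in>F. c f = j}. f y \<noteq> 0} = {}" by blast
    then show False using that unfolding \<phi>_def by (metis sum.empty)
  qed
  have lf: "\<exists>V. openin X V \<and> x \<in> V \<and> finite {j\<in>J. \<exists>y\<in>V. \<phi> j y \<noteq> 0}" if x: "x \<in> topspace X" for x
  proof -
    obtain V where V: "openin X V" "x \<in> V" "finite {f\<in>F. \<exists>y\<in>V. f y \<noteq> 0}" using Flf[OF x] by blast
    have "{j\<in>J. \<exists>y\<in>V. \<phi> j y \<noteq> 0} \<subseteq> c ` {f\<in>F. \<exists>y\<in>V. f y \<noteq> 0}"
      using nz by blast
    then have "finite {j\<in>J. \<exists>y\<in>V. \<phi> j y \<noteq> 0}" using V(3) finite_subset by blast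
    then show ?thesis using V by blast
  qed
  have sum1: "(\<Sum>j\<in>{j\<in>J. \<phi> j x \<noteq> 0}. \<phi> j x) = 1" if x: "x \<in> topspace X" for x
  proof -
    define Fx where "Fx = {f\<in>F. f x \<noteq> 0}"
    have fin: "finite Fx"
    proof -
      obtain V where V: "openin X V" "x \<in> V" "finite {f\<in>F. \<exists>y\<in>V. f y \<noteq> 0}" using Flf[OF x] by blast
      show ?thesis unfolding Fx_def by (rule finite_subset[OF _ V(3)]) (use V in blast)
    qed
    have phi_eq: "\<phi> j x = (\<Sum>f\<in>{f\<in>Fx. c f = j}. f x)" for j
      unfolding \<phi>_def Fx_def by (rule sum.cong) auto
    have "(\<Sum>j\<in>{j\<in>J. \<phi> j x \<noteq> 0}. \<phi> j x) = (\<Sum>j\<in>c ` Fx. \<phi> j x)"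
      by (rule sum.mono_neutral_left) (use fin nz c in \<open>auto simp: Fx_def\<close>)
    also have "\<dots> = (\<Sum>f\<in>Fx. f x)"
      unfolding phi_eq by (rule sum.group) (use fin in auto)
    also have "\<dots> = 1" using Fs x unfolding Fx_def by simp
    finally show ?thesis .
  qed
  show ?thesis
    unfolding ipou_def isub_def using cont nn lf sum1 clo by blast
qed

lemma cont_Max:
  assumes "finite E" "E \<noteq> {}" "\<And>j. j\<in>E \<Longrightarrow> continuous_map X euclideanreal (t j)"
  shows "continuous_map X euclideanreal (\<lambda>y. Max ((\<lambda>j. t j y) ` E))"
  using assms
proof (induction E rule: finite_ne_induct)
  case (singleton x)
  then show ?case by simp
next
  case (insert x F)
  then show ?case by (simp add: continuous_map_real_max)
qed

lemma openin_less:
  assumes "continuous_map X euclideanreal a" "continuous_map X euclideanreal b"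
  shows "openin X {y\<in>topspace X. a y < b y}"
proof -
  have "openin X {y\<in>topspace X. b y - a y \<in> {0<..}}"
    by (rule openin_continuous_map_preimage) (use assms in \<open>auto intro: continuous_map_diff\<close>)
  then show ?thesis by simp
qed

lemma closedin_le:
  assumes "continuous_map X euclideanreal a" "continuous_map X euclideanreal b"
  shows "closedin X {y\<in>topspace X. a y \<le> b y}"
proof -
  have "closedin X {y\<in>topspace X. b y - a y \<in> {0..}}"
    by (rule closedin_continuous_map_preimage) (use assms in \<open>auto intro: continuous_map_diff\<close>)
  then show ?thesis by simp
qed

lemma dold:
  assumes cont: "\<And>j. j\<in>J \<Longrightarrow> continuous_map X euclideanreal (t j)"
  and nn: "\<And>j x. j\<in>J \<Longrightarrow> x\<in>topspace X \<Longrightarrow> 0 \<le> t j x"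
  and fin: "\<And>x. x\<in>topspace X \<Longrightarrow> finite {j\<in>J. t j x \<noteq> 0}"
  and s1: "\<And>x. x\<in>topspace X \<Longrightarrow> (\<Sum>j\<in>{j\<in>J. t j x \<noteq> 0}. t j x) = 1"
  and sup: "\<And>j x. j\<in>J \<Longrightarrow> x\<in>topspace X \<Longrightarrow> t j x \<noteq> 0 \<Longrightarrow> x \<in> U j"
  shows "\<exists>w. ipou X J w \<and> isub X J w U \<and> (\<forall>j x. x \<notin> topspace X \<longrightarrow> w j x = 0)"
proof -
  define Jx where "Jx x = {j\<in>J. t j x \<noteq> 0}" for x
  have Jne: "Jx x \<noteq> {}" if "x\<in>topspace X" for x
    using s1[OF that] unfolding Jx_def by (metis (no_types, lifting) sum.empty zero_neq_one)
  define s where "s x = Max ((\<lambda>j. t j x) ` Jx x)" for x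
  have s_ge: "t j x \<le> s x" if jJ: "j \<in> J" and xt: "x\<in>topspace X" for j x
  proof (cases "t j x = 0")
    case True
    obtain k where k: "k \<in> Jx x" using Jne[OF xt] by blast
    then have "t k x \<le> s x" unfolding s_def using fin[OF xt] by (auto simp: Jx_def)
    moreover have "0 \<le> t k x" using nn k xt by (auto simp: Jx_def)
    ultimately show ?thesis using True by simp
  next
    case False
    then show ?thesis unfolding s_def using fin[OF xt] jJ by (auto simp: Jx_def)
  qed
  have s_att: "\<exists>j\<in>Jx x. t j x = s x" if "x\<in>topspace X" for x
  proof -
    have "s x \<in> (\<lambda>j. t j x) ` Jx x" unfolding s_def
      by (rule Max_in) (use fin[OF that] Jne[OF that] in \<open>auto simp: Jx_def\<close>)
    then show ?thesis by auto
  qed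
  have s_pos: "0 < s x" if xt: "x\<in>topspace X" for x
  proof -
    obtain j where "j \<in> Jx x" "t j x = s x" using s_att[OF xt] by blast
    then show ?thesis using nn[of j x] xt by (auto simp: Jx_def)
  qed
  have tail: "t j y \<le> 1 - (\<Sum>i\<in>E. t i y)"
    if E: "finite E" "E \<subseteq> J" and j: "j \<in> J - E" and y: "y \<in> topspace X" for E j y
  proof -
    have fy: "finite (Jx y)" using fin[OF y] by (simp add: Jx_def)
    have "1 = (\<Sum>i\<in>Jx y \<union> E. t i y)"
      using s1[OF y] by (subst sum.mono_neutral_right[OF _ _, of "Jx y \<union> E" "Jx y"]) (use fy E in \<open>auto simp: Jx_def\<close>)
    also have "\<dots> = (\<Sum>i\<in>E. t i y) + (\<Sum>i\<in>Jx y - E. t i y)"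
      by (metis (no_types, lifting) E(1) Un_Diff_cancel2 add.commute finite_Diff fy sum.union_disjoint
          Diff_disjoint inf_commute)
    finally have eq: "(\<Sum>i\<in>Jx y - E. t i y) = 1 - (\<Sum>i\<in>E. t i y)" by simp
    have "t j y \<le> (\<Sum>i\<in>Jx y - E. t i y)"
    proof (cases "t j y = 0")
      case True
      then show ?thesis using nn y by (auto intro!: sum_nonneg simp: Jx_def)
    next
      case False
      then show ?thesis
        by (intro member_le_sum) (use j fy nn y in \<open>auto simp: Jx_def\<close>)
    qed
    then show ?thesis using eq by simp
  qed
  have s_cont: "continuous_map X euclideanreal s"
  proof (rule cont_local)
    fix x0 assume x0: "x0 \<in> topspace X"
    define E where "E = Jx x0"
    have E: "finite E" "E \<subseteq> J" "E \<noteq> {}" using fin[OF x0] Jne[OF x0] by (auto simp: E_def Jx_def)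
    define m where "m y = Max ((\<lambda>j. t j y) ` E)" for y
    define tl where "tl y = 1 - (\<Sum>i\<in>E. t i y)" for y
    have mc: "continuous_map X euclideanreal m" unfolding m_def
      by (rule cont_Max) (use E cont in auto)
    have tc: "continuous_map X euclideanreal tl" unfolding tl_def
      by (intro continuous_map_diff continuous_map_sum) (use E cont in auto)
    define N where "N = {y\<in>topspace X. tl y < m y}"
    have No: "openin X N" unfolding N_def by (rule openin_less[OF tc mc])
    have "tl x0 = 0" using s1[OF x0] by (simp add: tl_def E_def Jx_def)
    moreover have "m x0 = s x0" by (simp add: m_def s_def E_def)
    ultimately have "x0 \<in> N" using s_pos[OF x0] x0 by (simp add: N_def)
    have eq: "s y = m y" if y: "y \<in> N" for y
    proof -
      have yt: "y \<in> topspace X" and lt: "tl y < m y" using y by (auto simp: N_def)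
      have "m y \<in> (\<lambda>j. t j y) ` E" unfolding m_def by (rule Max_in) (use E in auto)
      then obtain e where e: "e \<in> E" "m y = t e y" by auto
      have "m y \<le> s y" using e E s_ge[OF _ yt, of e] by auto
      moreover have "s y \<le> m y"
      proof -
        obtain j where j: "j \<in> Jx y" "t j y = s y" using s_att[OF yt] by blast
        show ?thesis
        proof (cases "j \<in> E")
          case True
          then have "t j y \<le> m y" using E unfolding m_def by (intro Max_ge) auto
          then show ?thesis using j by simp
        next
          case False
          then have "t j y \<le> tl y" unfolding tl_def using tail[OF E(1,2) _ yt, of j] j by (auto simp: Jx_def)
          then show ?thesis using j lt by simp
        qed
      qed
      ultimately show ?thesis by simp
    qed
    have "continuous_map (subtopology X N) euclideanreal s"
      by (rule continuous_map_eq[OF continuous_map_from_subtopology[OF mc]]) (use eq in \<open>auto simp: topspace_subtopology\<close>)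
    then show "\<exists>V. openin X V \<and> x0 \<in> V \<and> continuous_map (subtopology X V) euclideanreal s"
      using No \<open>x0 \<in> N\<close> by blast
  qed
  have sc2: "continuous_map X euclideanreal (\<lambda>y. s y / 2)"
    using continuous_map_real_mult_right[OF s_cont, of "1/2"] by simp
  define v where "v j y = max 0 (t j y - s y / 2)" for j y
  have vc: "continuous_map X euclideanreal (v j)" if "j \<in> J" for j
    unfolding v_def[abs_def]
    by (intro continuous_map_real_max continuous_map_diff)
       (use cont[OF that] sc2 in \<open>auto simp: continuous_map_const\<close>)
  have vnn: "0 \<le> v j y" for j y by (simp add: v_def)
  have v_tpos: "t j y \<noteq> 0" if "v j y \<noteq> 0" "y \<in> topspace X" for j y
    using that s_pos[OF that(2)] by (auto simp: v_def)
  have vlf: "\<exists>V. openin X V \<and> x0 \<in> V \<and> finite {j\<in>J. \<exists>y\<in>V. v j y \<noteq> 0}" if x0: "x0 \<in> topspace X" for x0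
  proof -
    define E where "E = Jx x0"
    have E: "finite E" "E \<subseteq> J" using fin[OF x0] by (auto simp: E_def Jx_def)
    define tl where "tl y = 1 - (\<Sum>i\<in>E. t i y)" for y
    have tc: "continuous_map X euclideanreal tl" unfolding tl_def
      by (intro continuous_map_diff continuous_map_sum) (use E cont in \<open>auto simp: continuous_map_const\<close>)
    define N where "N = {y\<in>topspace X. tl y < s y / 2}"
    have No: "openin X N" unfolding N_def by (rule openin_less[OF tc sc2])
    have "tl x0 = 0" using s1[OF x0] by (simp add: tl_def E_def Jx_def)
    then have "x0 \<in> N" using s_pos[OF x0] x0 by (simp add: N_def)
    have "{j\<in>J. \<exists>y\<in>N. v j y \<noteq> 0} \<subseteq> E"
    proof clarify
      fix j y assume j: "j \<in> J" and y: "y \<in> N" and nz: "v j y \<noteq> 0"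
      show "j \<in> E"
      proof (rule ccontr)
        assume "j \<notin> E"
        then have "t j y \<le> tl y" unfolding tl_def using tail[OF E, of j y] j y by (auto simp: N_def)
        then have "v j y = 0" using y by (auto simp: N_def v_def)
        then show False using nz by simp
      qed
    qed
    then show ?thesis using No \<open>x0 \<in> N\<close> E(1) by (meson finite_subset)
  qed
  define V where "V y = (\<Sum>j\<in>{j\<in>J. v j y \<noteq> 0}. v j y)" for y
  have Vc: "continuous_map X euclideanreal V"
    unfolding V_def[abs_def] by (rule lf_sum(1)) (use vc vlf in auto)
  have Vpos: "0 < V y" if y: "y \<in> topspace X" for y
  proof -
    obtain j where j: "j \<in> Jx y" "t j y = s y" using s_att[OF y] by blast
    have vj: "v j y = s y / 2" using j s_pos[OF y] by (simp add: v_def)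
    have fv: "finite {j\<in>J. v j y \<noteq> 0}"
      by (rule finite_subset[OF _ fin[OF y]]) (use v_tpos y in auto)
    have "v j y \<le> V y" unfolding V_def
      by (rule member_le_sum) (use j vj s_pos[OF y] fv vnn in \<open>auto simp: Jx_def\<close>)
    then show ?thesis using vj s_pos[OF y] by simp
  qed
  define w where "w j y = (if y \<in> topspace X then v j y / V y else 0)" for j y
  have wc: "continuous_map X euclideanreal (w j)" if "j \<in> J" for j
  proof -
    have "continuous_map X euclideanreal (\<lambda>y. v j y / V y)"
      by (rule continuous_map_real_divide[OF vc[OF that] Vc]) (use Vpos in force)
    then show ?thesis by (rule continuous_map_eq) (simp add: w_def)
  qed
  have wnz: "w j y \<noteq> 0 \<longleftrightarrow> v j y \<noteq> 0" if "y \<in> topspace X" for j y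
    using Vpos[OF that] that by (simp add: w_def)
  have ip: "ipou X J w"
    unfolding ipou_def
  proof (intro conjI ballI)
    fix j assume "j \<in> J"
    then show "continuous_map X euclideanreal (w j)" using wc by blast
  next
    fix j x assume "j \<in> J" "x \<in> topspace X"
    then show "0 \<le> w j x"
      using Vpos[of x] vnn[of j x] by (auto simp: w_def)
  next
    fix x assume x: "x \<in> topspace X"
    obtain N where N: "openin X N" "x \<in> N" "finite {j\<in>J. \<exists>y\<in>N. v j y \<noteq> 0}" using vlf[OF x] by blast
    have "{j\<in>J. \<exists>y\<in>N. w j y \<noteq> 0} \<subseteq> {j\<in>J. \<exists>y\<in>N. v j y \<noteq> 0}"
      using wnz openin_subset[OF N(1)] by blast
    then show "\<exists>V. openin X V \<and> x \<in> V \<and> finite {j\<in>J. \<exists>y\<in>V. w j y \<noteq> 0}"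
      using N finite_subset by blast
  next
    fix x assume x: "x \<in> topspace X"
    have "{j\<in>J. w j x \<noteq> 0} = {j\<in>J. v j x \<noteq> 0}" using wnz[OF x] by blast
    then have "(\<Sum>j\<in>{j\<in>J. w j x \<noteq> 0}. w j x) = (\<Sum>j\<in>{j\<in>J. v j x \<noteq> 0}. v j x / V x)"
      using x by (simp add: w_def)
    also have "\<dots> = V x / V x" unfolding V_def by (rule sum_divide_distrib[symmetric])
    also have "\<dots> = 1" using Vpos[OF x] by simp
    finally show "(\<Sum>j\<in>{j\<in>J. w j x \<noteq> 0}. w j x) = 1" .
  qed
  have isb: "isub X J w U"
    unfolding isub_def
  proof
    fix j assume j: "j \<in> J"
    have C: "closedin X {y\<in>topspace X. s y / 2 \<le> t j y}" by (rule closedin_le[OF sc2 cont[OF j]])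
    have "{x\<in>topspace X. w j x \<noteq> 0} \<subseteq> {y\<in>topspace X. s y / 2 \<le> t j y}"
      using wnz by (auto simp: v_def)
    then have "X closure_of {x\<in>topspace X. w j x \<noteq> 0} \<subseteq> {y\<in>topspace X. s y / 2 \<le> t j y}"
      by (rule closure_of_minimal[OF _ C])
    also have "\<dots> \<subseteq> U j"
    proof clarify
      fix y assume "y \<in> topspace X" "s y / 2 \<le> t j y"
      then show "y \<in> U j" using sup[OF j] s_pos[of y] by force
    qed
    finally show "X closure_of {x\<in>topspace X. w j x \<noteq> 0} \<subseteq> U j" .
  qed
  show ?thesis using ip isb by (intro exI[of _ w]) (simp add: w_def)
qed

lemma to_set:
  assumes ip: "ipou X J w" and isb: "isub X J w U" and UJ: "\<And>j. j\<in>J \<Longrightarrow> U j \<in> \<U>"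
  shows "\<exists>F. locally_finite_partition_of_unity X F \<and> subordinate_to X F \<U>"
proof -
  have wc: "\<And>j. j\<in>J \<Longrightarrow> continuous_map X euclideanreal (w j)"
    and wnn: "\<And>j x. j\<in>J \<Longrightarrow> x\<in>topspace X \<Longrightarrow> 0 \<le> w j x"
    and wlf: "\<And>x. x\<in>topspace X \<Longrightarrow> \<exists>V. openin X V \<and> x \<in> V \<and> finite {j\<in>J. \<exists>y\<in>V. w j y \<noteq> 0}"
    and ws: "\<And>x. x\<in>topspace X \<Longrightarrow> (\<Sum>j\<in>{j\<in>J. w j x \<noteq> 0}. w j x) = 1"
    using ip unfolding ipou_def by simp_all
  have wsub: "\<And>j. j\<in>J \<Longrightarrow> X closure_of {x\<in>topspace X. w j x \<noteq> 0} \<subseteq> U j"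
    using isb unfolding isub_def by blast
  have wfin: "finite {j\<in>J. w j x \<noteq> 0}" if x: "x\<in>topspace X" for x
  proof -
    obtain V where V: "openin X V" "x \<in> V" "finite {j\<in>J. \<exists>y\<in>V. w j y \<noteq> 0}" using wlf[OF x] by blast
    show ?thesis by (rule finite_subset[OF _ V(3)]) (use V in blast)
  qed
  define P where "P k m \<longleftrightarrow> (\<exists>c>0. w m = (\<lambda>y. c * w k y))" for k m
  define cls where "cls k = {m\<in>J. P k m}" for k
  define H where "H k y = (\<Sum>m\<in>{m\<in>cls k. w m y \<noteq> 0}. w m y)" for k y
  have Prefl: "P k k" for k unfolding P_def by (rule exI[of _ 1]) simp
  have Psym: "P m k" if PP: "P k m" for k m
  proof -
    obtain c where c: "c > 0" "w m = (\<lambda>y. c * w k y)" using PP unfolding P_def by blast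
    show ?thesis unfolding P_def by (rule exI[of _ "1/c"]) (use c in auto)
  qed
  have Ptrans: "P k n" if PP: "P k m" "P m n" for k m n
  proof -
    obtain c where c: "c > 0" "w m = (\<lambda>y. c * w k y)" using PP(1) unfolding P_def by blast
    obtain d where d: "d > 0" "w n = (\<lambda>y. d * w m y)" using PP(2) unfolding P_def by blast
    show ?thesis unfolding P_def by (rule exI[of _ "d*c"]) (use c d in auto)
  qed
  have Pnz: "w m y \<noteq> 0 \<longleftrightarrow> w k y \<noteq> 0" if PP: "P k m" for k m y
  proof -
    obtain c where c: "c > 0" "w m = (\<lambda>y. c * w k y)" using PP unfolding P_def by blast
    show ?thesis using c by simp
  qed
  have cls_fin: "finite (cls k)" if "k \<in> J" "x \<in> topspace X" "w k x \<noteq> 0" for k x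
    by (rule finite_subset[OF _ wfin[OF that(2)]]) (use Pnz[of k _ x] that(3) in \<open>unfold cls_def, blast\<close>)
  have H_alt: "H k y = (\<Sum>m\<in>cls k. w m y)" if "finite (cls k)" for k y
    unfolding H_def by (rule sum.mono_neutral_left) (use that in auto)
  define C where "C k = (\<Sum>m\<in>cls k. (SOME c. c > 0 \<and> w m = (\<lambda>y. c * w k y)))" for k
  have H_C: "H k = (\<lambda>y. C k * w k y) \<and> C k > 0" if kJ: "k \<in> J" and kf: "finite (cls k)" for k
  proof -
    define cc where "cc m = (SOME c. c > 0 \<and> w m = (\<lambda>y. c * w k y))" for m
    have Ck: "C k = (\<Sum>m\<in>cls k. cc m)" unfolding C_def cc_def ..
    have sm: "cc m > 0 \<and> w m = (\<lambda>y. cc m * w k y)" if mc: "m \<in> cls k" for m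
      unfolding cc_def by (rule someI_ex) (use mc in \<open>unfold cls_def P_def, blast\<close>)
    have "H k y = C k * w k y" for y
    proof -
      have "H k y = (\<Sum>m\<in>cls k. w m y)" by (rule H_alt[OF kf])
      also have "\<dots> = (\<Sum>m\<in>cls k. cc m * w k y)"
      proof (rule sum.cong[OF refl])
        fix m assume "m \<in> cls k"
        then have e: "w m = (\<lambda>y. cc m * w k y)" using sm by blast
        show "w m y = cc m * w k y" using fun_cong[OF e, of y] by simp
      qed
      also have "\<dots> = C k * w k y" unfolding Ck by (simp add: sum_distrib_right)
      finally show ?thesis .
    qed
    moreover have "k \<in> cls k" using kJ Prefl by (simp add: cls_def)
    then have "C k > 0" unfolding Ck
      by (intro sum_pos[OF kf]) (use sm in blast)+
    ultimately show ?thesis by auto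
  qed
  have Hnz: "H k y \<noteq> 0 \<longleftrightarrow> w k y \<noteq> 0" if "k \<in> J" "y \<in> topspace X" for k y
  proof (cases "w k y = 0")
    case True
    then have "{m\<in>cls k. w m y \<noteq> 0} = {}" using Pnz[of k _ y] unfolding cls_def by blast
    then show ?thesis using True unfolding H_def by (metis sum.empty)
  next
    case False
    then show ?thesis using H_C[OF that(1) cls_fin[OF that False]] by simp
  qed
  have Hnz2: "w k y \<noteq> 0" if "H k y \<noteq> 0" for k y
  proof (rule ccontr)
    assume "\<not> w k y \<noteq> 0"
    then have "{m\<in>cls k. w m y \<noteq> 0} = {}" using Pnz[of k _ y] unfolding cls_def by blast
    then show False using that unfolding H_def by (metis sum.empty)
  qed
  have Hlf: "\<exists>V. openin X V \<and> x \<in> V \<and> finite {m\<in>cls k. \<exists>y\<in>V. w m y \<noteq> 0}" if x: "x \<in> topspace X" for x k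
  proof -
    obtain V where V: "openin X V" "x \<in> V" "finite {j\<in>J. \<exists>y\<in>V. w j y \<noteq> 0}" using wlf[OF x] by blast
    have "finite {m\<in>cls k. \<exists>y\<in>V. w m y \<noteq> 0}" by (rule finite_subset[OF _ V(3)]) (auto simp: cls_def)
    then show ?thesis using V by blast
  qed
  have Hc: "continuous_map X euclideanreal (H k)" if "k \<in> J" for k
    unfolding H_def[abs_def] by (rule lf_sum(1)) (use wc Hlf in \<open>auto simp: cls_def\<close>)
  have Hsub: "X closure_of {x\<in>topspace X. H k x \<noteq> 0} \<subseteq> U k" if k: "k \<in> J" for k
  proof -
    have "X closure_of {x\<in>topspace X. H k x \<noteq> 0} \<subseteq> (\<Union>m\<in>cls k. X closure_of {x\<in>topspace X. w m x \<noteq> 0})"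
      unfolding H_def by (rule lf_sum(2)) (use wc Hlf in \<open>auto simp: cls_def\<close>)
    also have "\<dots> \<subseteq> X closure_of {x\<in>topspace X. w k x \<noteq> 0}"
    proof (rule UN_least)
      fix m assume "m \<in> cls k"
      then have "{x\<in>topspace X. w m x \<noteq> 0} = {x\<in>topspace X. w k x \<noteq> 0}"
        using Pnz by (auto simp: cls_def)
      then show "X closure_of {x\<in>topspace X. w m x \<noteq> 0} \<subseteq> X closure_of {x\<in>topspace X. w k x \<noteq> 0}" by simp
    qed
    also have "\<dots> \<subseteq> U k" by (rule wsub[OF k])
    finally show ?thesis .
  qed
  define F where "F = H ` J"
  have lfpu: "locally_finite_partition_of_unity X F"
    unfolding locally_finite_partition_of_unity_def
  proof (intro conjI ballI)
    fix f assume "f \<in> F"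
    then obtain k where k: "k \<in> J" "f = H k" by (auto simp: F_def)
    show "continuous_map X euclideanreal f" using Hc k by simp
  next
    fix f x assume "f \<in> F" "x \<in> topspace X"
    then obtain k where k: "k \<in> J" "f = H k" by (auto simp: F_def)
    show "0 \<le> f x" unfolding k H_def using wnn \<open>x \<in> topspace X\<close> by (auto simp: cls_def intro!: sum_nonneg)
  next
    fix x assume x: "x \<in> topspace X"
    obtain V where V: "openin X V" "x \<in> V" "finite {j\<in>J. \<exists>y\<in>V. w j y \<noteq> 0}" using wlf[OF x] by blast
    have "{f\<in>F. \<exists>y\<in>V. f y \<noteq> 0} \<subseteq> H ` {j\<in>J. \<exists>y\<in>V. w j y \<noteq> 0}"
      using Hnz2 by (auto simp: F_def)
    then have "finite {f\<in>F. \<exists>y\<in>V. f y \<noteq> 0}" using V(3) finite_surj by blast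
    then show "\<exists>V. openin X V \<and> x \<in> V \<and> finite {f\<in>F. \<exists>y\<in>V. f y \<noteq> 0}" using V by blast
  next
    fix x assume x: "x \<in> topspace X"
    define Jx where "Jx = {j\<in>J. w j x \<noteq> 0}"
    have fJx: "finite Jx" using wfin[OF x] by (simp add: Jx_def)
    have Fx: "{f\<in>F. f x \<noteq> 0} = H ` Jx" using Hnz x by (auto simp: F_def Jx_def)
    have grp: "(\<Sum>k\<in>{k\<in>Jx. H k = h}. w k x) = h x" if hH: "h \<in> H ` Jx" for h
    proof -
      obtain k0 where k0: "k0 \<in> Jx" "h = H k0" using hH by blast
      have k0J: "k0 \<in> J" and k0x: "w k0 x \<noteq> 0" using k0 by (auto simp: Jx_def)
      have fin0: "finite (cls k0)" by (rule cls_fin[OF k0J x k0x])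
      have "{k\<in>Jx. H k = H k0} = cls k0"
      proof (intro set_eqI iffI)
        fix k assume k: "k \<in> {k\<in>Jx. H k = H k0}"
        then have kJ: "k \<in> J" and kx: "w k x \<noteq> 0" and eq: "H k = H k0" by (auto simp: Jx_def)
        have fin: "finite (cls k)" by (rule cls_fin[OF kJ x kx])
        obtain Ck C0 where Ck: "H k = (\<lambda>y. Ck * w k y)" "Ck > 0" and C0: "H k0 = (\<lambda>y. C0 * w k0 y)" "C0 > 0"
          using H_C[OF kJ fin] H_C[OF k0J fin0] by blast
        have "w k = (\<lambda>y. (C0 / Ck) * w k0 y)"
        proof
          fix y have "Ck * w k y = C0 * w k0 y" using fun_cong[OF eq, of y] by (simp add: Ck(1) C0(1))
          then show "w k y = C0 / Ck * w k0 y" using Ck(2) by (simp add: field_simps)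
        qed
        then have "P k0 k" unfolding P_def using Ck(2) C0(2) by (intro exI[of _ "C0/Ck"]) simp
        then show "k \<in> cls k0" using kJ by (simp add: cls_def)
      next
        fix k assume k: "k \<in> cls k0"
        then have kJ: "k \<in> J" and P: "P k0 k" by (auto simp: cls_def)
        have "cls k = cls k0" unfolding cls_def using P Psym Ptrans by blast
        then have "H k = H k0" by (intro ext) (simp only: H_def)
        moreover have "w k x \<noteq> 0" using Pnz[OF P] k0x by simp
        ultimately show "k \<in> {k\<in>Jx. H k = H k0}" using kJ by (simp add: Jx_def)
      qed
      then show ?thesis using k0 H_alt[OF fin0] by simp
    qed
    have "(\<Sum>f\<in>{f\<in>F. f x \<noteq> 0}. f x) = (\<Sum>h\<in>H ` Jx. h x)" by (simp add: Fx)
    also have "\<dots> = (\<Sum>h\<in>H ` Jx. \<Sum>k\<in>{k\<in>Jx. H k = h}. w k x)"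
      by (rule sum.cong[OF refl]) (simp add: grp)
    also have "\<dots> = (\<Sum>k\<in>Jx. w k x)" by (rule sum.group) (use fJx in auto)
    also have "\<dots> = 1" using ws[OF x] by (simp add: Jx_def)
    finally show "(\<Sum>f\<in>{f\<in>F. f x \<noteq> 0}. f x) = 1" .
  qed
  have "subordinate_to X F \<U>"
    unfolding subordinate_to_def F_def using Hsub UJ by blast
  then show ?thesis using lfpu by blast
qed

lemma openin_all_in:
  assumes "finite G" "\<And>j. j\<in>G \<Longrightarrow> openin X (j \<inter> topspace X)"
  shows "openin X {y\<in>topspace X. \<forall>j\<in>G. y \<in> j}"
  using assms
proof (induction G rule: finite_induct)
  case empty
  then show ?case by simp
next
  case (insert a G)
  have "{y\<in>topspace X. \<forall>j\<in>insert a G. y \<in> j} = (a \<inter> topspace X) \<inter> {y\<in>topspace X. \<forall>j\<in>G. y \<in> j}"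
    by auto
  then show ?case using insert by (metis (no_types, lifting) insertCI openin_Int)
qed

lemma ext_step:
  assumes para: "paracompact_space X"
    and Acl: "closedin X A"
    and nr: "neighbourhood_retract A X"
    and ipA: "ipou (subtopology X A) J \<phi>" and isA: "isub (subtopology X A) J \<phi> (\<lambda>j. j)"
    and opn: "\<And>j. j\<in>J \<Longrightarrow> openin X (j \<inter> topspace X)"
    and cov: "topspace X \<subseteq> \<Union>J"
  shows "\<exists>\<phi>'. ipou X J \<phi>' \<and> isub X J \<phi>' (\<lambda>j. j) \<and> (\<forall>j\<in>J. \<forall>x\<in>A. \<phi>' j x = \<phi> j x)"
proof -
  define XA where "XA = subtopology X A"
  have At: "A \<subseteq> topspace X" using closedin_subset[OF Acl] .
  have tXA: "topspace XA = A" using At by (auto simp: XA_def)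
  obtain W where W: "openin X W" "A \<subseteq> W" "A retract_of_space subtopology X W"
    using nr unfolding neighbourhood_retract_def by blast
  obtain r where r0: "continuous_map (subtopology X W) (subtopology (subtopology X W) A) r" and rid: "\<And>x. x\<in>A \<Longrightarrow> r x = x"
    using W(3) unfolding retract_of_space_def by blast
  have "subtopology (subtopology X W) A = XA" using W(2) by (simp add: subtopology_subtopology XA_def Int_absorb1)
  then have rc: "continuous_map (subtopology X W) XA r" using r0 by simp
  have Wt: "W \<subseteq> topspace X" using openin_subset[OF W(1)] .
  have rA: "r y \<in> A" if "y \<in> W" for y
    using continuous_map_image_subset_topspace[OF rc] that Wt tXA by auto
  have \<phi>c: "\<And>j. j\<in>J \<Longrightarrow> continuous_map XA euclideanreal (\<phi> j)"
    and \<phi>nn: "\<And>j x. j\<in>J \<Longrightarrow> x\<in>A \<Longrightarrow> 0 \<le> \<phi> j x"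
    and \<phi>lf: "\<And>x. x\<in>A \<Longrightarrow> \<exists>V. openin XA V \<and> x \<in> V \<and> finite {j\<in>J. \<exists>y\<in>V. \<phi> j y \<noteq> 0}"
    and \<phi>s: "\<And>x. x\<in>A \<Longrightarrow> (\<Sum>j\<in>{j\<in>J. \<phi> j x \<noteq> 0}. \<phi> j x) = 1"
    using ipA unfolding ipou_def XA_def[symmetric] tXA by simp_all
  define C where "C j = XA closure_of {x\<in>topspace XA. \<phi> j x \<noteq> 0}" for j
  have Cj: "C j \<subseteq> j" if "j \<in> J" for j using isA that unfolding isub_def C_def XA_def by blast
  have CXA: "closedin XA (C j)" for j unfolding C_def by simp
  have suppC: "x \<in> C j" if "x \<in> A" "\<phi> j x \<noteq> 0" for x j
    unfolding C_def using closure_of_subset[of "{x\<in>topspace XA. \<phi> j x \<noteq> 0}" XA] that tXA by auto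
  have CV: "j \<in> {j\<in>J. \<exists>y\<in>V. \<phi> j y \<noteq> 0}" if "j \<in> J" "z \<in> C j" "z \<in> V" "openin XA V" for j z V
  proof -
    have "\<exists>y. y \<in> {x\<in>topspace XA. \<phi> j x \<noteq> 0} \<and> y \<in> V"
      using that(2,3,4) unfolding C_def in_closure_of by blast
    then show ?thesis using that(1) by blast
  qed
  define W' where "W' = {w\<in>W. \<forall>j\<in>J. r w \<in> C j \<longrightarrow> w \<in> j}"
  have AW': "A \<subseteq> W'" unfolding W'_def using W(2) rid Cj by fastforce
  have W'W: "W' \<subseteq> W" unfolding W'_def by auto
  have W'o: "openin X W'"
  proof (subst openin_subopen, intro ballI)
    fix w assume w: "w \<in> W'"
    then have wW: "w \<in> W" by (simp add: W'_def)
    obtain V where V: "openin XA V" "r w \<in> V" "finite {j\<in>J. \<exists>y\<in>V. \<phi> j y \<noteq> 0}"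
      using \<phi>lf[OF rA[OF wW]] by blast
    define G where "G = {j\<in>J. \<exists>y\<in>V. \<phi> j y \<noteq> 0}"
    define G1 where "G1 = {j\<in>G. r w \<in> C j}"
    define G2 where "G2 = {j\<in>G. r w \<notin> C j}"
    have fG1: "finite G1" unfolding G1_def by (rule finite_subset[OF _ V(3)]) (auto simp: G_def)
    have fG2: "finite G2" unfolding G2_def by (rule finite_subset[OF _ V(3)]) (auto simp: G_def)
    define O1 where "O1 = V - (\<Union>j\<in>G2. C j)"
    have O1o: "openin XA O1" unfolding O1_def
      by (rule openin_diff[OF V(1)]) (use fG2 CXA in \<open>auto intro: closedin_Union\<close>)
    define N0 where "N0 = {y\<in>topspace (subtopology X W). r y \<in> O1}"
    have "openin (subtopology X W) N0" unfolding N0_def by (rule openin_continuous_map_preimage[OF rc O1o])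
    then have N0o: "openin X N0" using W(1) openin_trans_full by blast
    define N where "N = N0 \<inter> {y\<in>topspace X. \<forall>j\<in>G1. y \<in> j}"
    have No: "openin X N" unfolding N_def
      by (rule openin_Int[OF N0o openin_all_in[OF fG1]]) (use opn in \<open>auto simp: G1_def G_def\<close>)
    have "w \<in> N" using w wW Wt V(2)
      unfolding N_def N0_def O1_def G2_def G1_def G_def W'_def by auto
    moreover have "N \<subseteq> W'"
    proof
      fix y assume y: "y \<in> N"
      then have yW: "y \<in> W" and ryO: "r y \<in> O1" and yG1: "\<forall>j\<in>G1. y \<in> j" by (auto simp: N_def N0_def)
      show "y \<in> W'" unfolding W'_def
      proof (intro CollectI conjI ballI impI yW)
        fix j assume j: "j \<in> J" "r y \<in> C j"
        have "j \<in> G" using CV[OF j(1) j(2) _ V(1)] ryO unfolding O1_def G_def by blast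
        then have "j \<in> G1" using j ryO unfolding O1_def G1_def G2_def by blast
        then show "y \<in> j" using yG1 by blast
      qed
    qed
    ultimately show "\<exists>T. openin X T \<and> w \<in> T \<and> T \<subseteq> W'" using No by blast
  qed
  define UU where "UU b = (if b then W' else topspace X - A)" for b :: bool
  obtain \<psi> where \<psi>: "ipou X (UNIV::bool set) \<psi>" "isub X UNIV \<psi> UU"
  proof -
    have "\<exists>\<psi>. ipou X (UNIV::bool set) \<psi> \<and> isub X UNIV \<psi> UU"
    proof (rule para_indexed[OF para])
      fix b :: bool
      show "openin X (UU b \<inter> topspace X)"
      proof (cases b)
        case True
        then show ?thesis using W'o openin_subset[OF W'o] by (simp add: UU_def Int_absorb2)
      next
        case False
        then show ?thesis using Acl by (simp add: UU_def Int_absorb2 openin_diff)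
      qed
    next
      show "topspace X \<subseteq> (\<Union>b\<in>UNIV. UU b)" using AW' by (auto simp: UU_def)
    qed
    then show thesis using that by blast
  qed
  define lam where "lam = \<psi> True"
  have \<psi>c: "continuous_map X euclideanreal (\<psi> b)" for b using \<psi>(1) by (simp add: ipou_def)
  have \<psi>nn: "0 \<le> \<psi> b x" if "x \<in> topspace X" for b x using \<psi>(1) that by (simp add: ipou_def)
  have \<psi>sum: "\<psi> True x + \<psi> False x = 1" if x: "x \<in> topspace X" for x
  proof -
    have "(\<Sum>b\<in>{b\<in>UNIV. \<psi> b x \<noteq> 0}. \<psi> b x) = 1" using \<psi>(1) x by (simp add: ipou_def)
    moreover have "(\<Sum>b\<in>{b\<in>UNIV. \<psi> b x \<noteq> 0}. \<psi> b x) = (\<Sum>b\<in>UNIV. \<psi> b x)"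
      by (rule sum.mono_neutral_left) auto
    ultimately show ?thesis by (simp add: UNIV_bool add.commute)
  qed
  have lamc: "continuous_map X euclideanreal lam" unfolding lam_def by (rule \<psi>c)
  have lam01: "0 \<le> lam x \<and> lam x \<le> 1" if "x \<in> topspace X" for x
    using \<psi>nn[OF that, of True] \<psi>nn[OF that, of False] \<psi>sum[OF that] by (simp add: lam_def)
  have lamA: "lam x = 1" if x: "x \<in> A" for x
  proof -
    have xt: "x \<in> topspace X" using x At by blast
    have "\<psi> False x = 0"
    proof (rule ccontr)
      assume "\<psi> False x \<noteq> 0"
      then have "x \<in> X closure_of {x\<in>topspace X. \<psi> False x \<noteq> 0}"
        using closure_of_subset[of "{x\<in>topspace X. \<psi> False x \<noteq> 0}" X] xt by auto
      moreover have "X closure_of {x\<in>topspace X. \<psi> False x \<noteq> 0} \<subseteq> UU False"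
        using \<psi>(2) unfolding isub_def by blast
      ultimately have "x \<in> topspace X - A" unfolding UU_def by auto
      then show False using x by blast
    qed
    then show ?thesis using \<psi>sum[OF xt] by (simp add: lam_def)
  qed
  define K where "K = X closure_of {x\<in>topspace X. lam x \<noteq> 0}"
  have KW: "K \<subseteq> W'"
  proof -
    have "X closure_of {x\<in>topspace X. \<psi> True x \<noteq> 0} \<subseteq> UU True"
      using \<psi>(2) unfolding isub_def by blast
    then show ?thesis unfolding K_def lam_def UU_def by simp
  qed
  have Kc: "closedin X K" unfolding K_def by simp
  have lam0: "lam y = 0" if "y \<in> topspace X" "y \<notin> K" for y
    using that closure_of_subset[of "{x\<in>topspace X. lam x \<noteq> 0}" X] unfolding K_def by auto
  obtain ch where ch: "ipou X J ch" "isub X J ch (\<lambda>j. j)"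
    using para_indexed[OF para, of J "\<lambda>j. j"] opn cov by auto
  have chc: "\<And>j. j\<in>J \<Longrightarrow> continuous_map X euclideanreal (ch j)"
    and chnn: "\<And>j x. j\<in>J \<Longrightarrow> x\<in>topspace X \<Longrightarrow> 0 \<le> ch j x"
    and ch_lf: "\<And>x. x\<in>topspace X \<Longrightarrow> \<exists>V. openin X V \<and> x \<in> V \<and> finite {j\<in>J. \<exists>y\<in>V. ch j y \<noteq> 0}"
    and ch_s: "\<And>x. x\<in>topspace X \<Longrightarrow> (\<Sum>j\<in>{j\<in>J. ch j x \<noteq> 0}. ch j x) = 1"
    using ch(1) unfolding ipou_def by simp_all
  have ch_sub: "\<And>j. j\<in>J \<Longrightarrow> X closure_of {x\<in>topspace X. ch j x \<noteq> 0} \<subseteq> j"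
    using ch(2) unfolding isub_def by simp
  define g where "g j x = (if x \<in> W then lam x * \<phi> j (r x) else 0)" for j x
  have gc: "continuous_map X euclideanreal (g j)" if j: "j \<in> J" for j
  proof (rule cont_local)
    fix x assume x: "x \<in> topspace X"
    show "\<exists>V. openin X V \<and> x \<in> V \<and> continuous_map (subtopology X V) euclideanreal (g j)"
    proof (cases "x \<in> W")
      case True
      have "continuous_map (subtopology X W) euclideanreal (\<lambda>y. lam y * \<phi> j (r y))"
        by (rule continuous_map_real_mult[OF continuous_map_from_subtopology[OF lamc]])
           (rule continuous_map_compose[OF rc \<phi>c[OF j], unfolded o_def])
      then have "continuous_map (subtopology X W) euclideanreal (g j)"
        by (rule continuous_map_eq) (simp add: g_def)
      then show ?thesis using W(1) True by blast
    next
      case False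
      have "openin X (topspace X - K)" using Kc by blast
      moreover have "x \<in> topspace X - K" using x False KW W'W by blast
      moreover have "continuous_map (subtopology X (topspace X - K)) euclideanreal (g j)"
      proof (rule continuous_map_eq[of _ _ "\<lambda>x. 0"])
        show "continuous_map (subtopology X (topspace X - K)) euclideanreal (\<lambda>x. 0::real)" by simp
      next
        fix y assume "y \<in> topspace (subtopology X (topspace X - K))"
        then show "0 = g j y" using lam0 by (simp add: g_def)
      qed
      ultimately show ?thesis by blast
    qed
  qed
  define \<phi>' where "\<phi>' j x = g j x + (1 - lam x) * ch j x" for j x
  have \<phi>'c: "continuous_map X euclideanreal (\<phi>' j)" if "j \<in> J" for j
    unfolding \<phi>'_def[abs_def]
    by (intro continuous_map_add continuous_map_real_mult continuous_map_diff gc that chc lamc)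
       (simp add: continuous_map_const)
  have gnn: "0 \<le> g j x" if "j \<in> J" "x \<in> topspace X" for j x
    using lam01[OF that(2)] \<phi>nn[OF that(1) rA[of x]] by (simp add: g_def)
  have \<phi>'nn: "0 \<le> \<phi>' j x" if "j \<in> J" "x \<in> topspace X" for j x
    using gnn[OF that] lam01[OF that(2)] chnn[OF that] by (simp add: \<phi>'_def)
  have gnz: "x \<in> W \<and> \<phi> j (r x) \<noteq> 0 \<and> lam x \<noteq> 0" if "g j x \<noteq> 0" for j x
    using that by (auto simp: g_def split: if_splits)
  have \<phi>'nz: "g j x \<noteq> 0 \<or> ch j x \<noteq> 0" if "\<phi>' j x \<noteq> 0" for j x
    using that by (auto simp: \<phi>'_def)
  have lf: "\<exists>V. openin X V \<and> x \<in> V \<and> finite {j\<in>J. \<exists>y\<in>V. \<phi>' j y \<noteq> 0}" if x: "x \<in> topspace X" for x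
  proof -
    obtain V1 where V1: "openin X V1" "x \<in> V1" "finite {j\<in>J. \<exists>y\<in>V1. ch j y \<noteq> 0}" using ch_lf[OF x] by blast
    obtain V2 G2 where V2: "openin X V2" "x \<in> V2" "finite G2" "\<And>j y. j \<in> J \<Longrightarrow> y \<in> V2 \<Longrightarrow> g j y \<noteq> 0 \<Longrightarrow> j \<in> G2"
    proof (cases "x \<in> W")
      case True
      obtain Vp where Vp: "openin XA Vp" "r x \<in> Vp" "finite {j\<in>J. \<exists>y\<in>Vp. \<phi> j y \<noteq> 0}"
        using \<phi>lf[OF rA[OF True]] by blast
      define V2 where "V2 = {y\<in>topspace (subtopology X W). r y \<in> Vp}"
      have "openin (subtopology X W) V2" unfolding V2_def by (rule openin_continuous_map_preimage[OF rc Vp(1)])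
      then have "openin X V2" using W(1) openin_trans_full by blast
      moreover have "x \<in> V2" using x True Vp(2) by (simp add: V2_def)
      moreover have "j \<in> {j\<in>J. \<exists>y\<in>Vp. \<phi> j y \<noteq> 0}" if "j \<in> J" "y \<in> V2" "g j y \<noteq> 0" for j y
        using that gnz[OF that(3)] by (auto simp: V2_def)
      ultimately show thesis using that[of V2 "{j\<in>J. \<exists>y\<in>Vp. \<phi> j y \<noteq> 0}"] Vp(3) by blast
    next
      case False
      have "openin X (topspace X - K)" using Kc by blast
      moreover have "x \<in> topspace X - K" using x False KW W'W by blast
      moreover have "g j y = 0" if "y \<in> topspace X - K" for j y using lam0 that by (simp add: g_def)
      ultimately show thesis using that[of "topspace X - K" "{}"] by blast
    qed
    have "{j\<in>J. \<exists>y\<in>V1 \<inter> V2. \<phi>' j y \<noteq> 0} \<subseteq> G2 \<union> {j\<in>J. \<exists>y\<in>V1. ch j y \<noteq> 0}"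
      using \<phi>'nz V2(4) by blast
    then have "finite {j\<in>J. \<exists>y\<in>V1 \<inter> V2. \<phi>' j y \<noteq> 0}"
      using V1(3) V2(3) by (meson finite_UnI finite_subset)
    then show ?thesis using V1 V2 by (intro exI[of _ "V1 \<inter> V2"]) (simp add: openin_Int)
  qed
  have chfin: "finite {j\<in>J. ch j x \<noteq> 0}" if x: "x \<in> topspace X" for x
  proof -
    obtain V where V: "openin X V" "x \<in> V" "finite {j\<in>J. \<exists>y\<in>V. ch j y \<noteq> 0}" using ch_lf[OF x] by blast
    show ?thesis by (rule finite_subset[OF _ V(3)]) (use V in blast)
  qed
  have phfin: "finite {j\<in>J. \<phi> j x \<noteq> 0}" if x: "x \<in> A" for x
  proof -
    obtain V where V: "openin XA V" "x \<in> V" "finite {j\<in>J. \<exists>y\<in>V. \<phi> j y \<noteq> 0}" using \<phi>lf[OF x] by blast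
    show ?thesis by (rule finite_subset[OF _ V(3)]) (use V in blast)
  qed
  have sum1: "(\<Sum>j\<in>{j\<in>J. \<phi>' j x \<noteq> 0}. \<phi>' j x) = 1" if x: "x \<in> topspace X" for x
  proof (cases "x \<in> W")
    case True
    define D where "D = {j\<in>J. \<phi> j (r x) \<noteq> 0} \<union> {j\<in>J. ch j x \<noteq> 0}"
    have fD: "finite D" using phfin[OF rA[OF True]] chfin[OF x] by (simp add: D_def)
    have "(\<Sum>j\<in>{j\<in>J. \<phi>' j x \<noteq> 0}. \<phi>' j x) = (\<Sum>j\<in>D. \<phi>' j x)"
      by (rule sum.mono_neutral_left[OF fD]) (use \<phi>'nz gnz in \<open>auto simp: D_def\<close>)
    also have "\<dots> = lam x * (\<Sum>j\<in>D. \<phi> j (r x)) + (1 - lam x) * (\<Sum>j\<in>D. ch j x)"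
      using True by (simp add: \<phi>'_def g_def sum.distrib sum_distrib_left)
    also have "(\<Sum>j\<in>D. \<phi> j (r x)) = 1"
    proof -
      have "(\<Sum>j\<in>{j\<in>J. \<phi> j (r x) \<noteq> 0}. \<phi> j (r x)) = (\<Sum>j\<in>D. \<phi> j (r x))"
        by (rule sum.mono_neutral_left[OF fD]) (auto simp: D_def)
      then show ?thesis using \<phi>s[OF rA[OF True]] by simp
    qed
    also have "(\<Sum>j\<in>D. ch j x) = 1"
    proof -
      have "(\<Sum>j\<in>{j\<in>J. ch j x \<noteq> 0}. ch j x) = (\<Sum>j\<in>D. ch j x)"
        by (rule sum.mono_neutral_left[OF fD]) (auto simp: D_def)
      then show ?thesis using ch_s[OF x] by simp
    qed
    finally show ?thesis by simp
  next
    case False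
    have "x \<notin> K" using False KW W'W by blast
    then have "\<phi>' j x = ch j x" for j using lam0[OF x] False by (simp add: \<phi>'_def g_def)
    then show ?thesis using ch_s[OF x] by simp
  qed
  have agree: "\<phi>' j x = \<phi> j x" if "j \<in> J" "x \<in> A" for j x
    using that lamA[OF that(2)] rid[OF that(2)] W(2) by (auto simp: \<phi>'_def g_def)
  have sub: "X closure_of {x\<in>topspace X. \<phi>' j x \<noteq> 0} \<subseteq> j" if j: "j \<in> J" for j
  proof -
    have "{x\<in>topspace X. \<phi>' j x \<noteq> 0} \<subseteq> {x\<in>topspace X. g j x \<noteq> 0} \<union> {x\<in>topspace X. ch j x \<noteq> 0}"
      using \<phi>'nz by blast
    then have "X closure_of {x\<in>topspace X. \<phi>' j x \<noteq> 0} \<subseteq>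
        X closure_of {x\<in>topspace X. g j x \<noteq> 0} \<union> X closure_of {x\<in>topspace X. ch j x \<noteq> 0}"
      unfolding closure_of_Un[symmetric] by (rule closure_of_mono)
    moreover have "X closure_of {x\<in>topspace X. g j x \<noteq> 0} \<subseteq> j"
    proof
      fix z assume z: "z \<in> X closure_of {x\<in>topspace X. g j x \<noteq> 0}"
      have gl: "{x\<in>topspace X. g j x \<noteq> 0} \<subseteq> {x\<in>topspace X. lam x \<noteq> 0}" using gnz by blast
      have "z \<in> K" using closure_of_mono[OF gl] z unfolding K_def by blast
      then have zW': "z \<in> W'" using KW by blast
      then have zW: "z \<in> W" using W'W by blast
      have zt: "z \<in> topspace X" using zW Wt by blast
      have "r z \<in> C j"
      proof (rule ccontr)
        assume nC: "r z \<notin> C j"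
        define N where "N = {y\<in>topspace (subtopology X W). r y \<in> topspace XA - C j}"
        have "openin XA (topspace XA - C j)" by (rule openin_diff[OF openin_topspace CXA])
        then have "openin (subtopology X W) N" unfolding N_def by (rule openin_continuous_map_preimage[OF rc])
        then have No: "openin X N" using W(1) openin_trans_full by blast
        have "z \<in> N" using zt zW nC rA[OF zW] tXA by (simp add: N_def)
        then obtain y where y: "y \<in> topspace X" "g j y \<noteq> 0" "y \<in> N"
          using z No unfolding in_closure_of by blast
        then have "y \<in> W" "\<phi> j (r y) \<noteq> 0" using gnz by blast+
        then have "r y \<in> C j" using suppC rA by blast
        then show False using y(3) by (simp add: N_def)
      qed
      then show "z \<in> j" using zW' j unfolding W'_def by blast
    qed
    ultimately show ?thesis using ch_sub[OF j] by blast
  qed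
  have "ipou X J \<phi>'" unfolding ipou_def using \<phi>'c \<phi>'nn lf sum1 by blast
  moreover have "isub X J \<phi>' (\<lambda>j. j)" unfolding isub_def using sub by blast
  ultimately show ?thesis using agree by blast
qed

theorem lemmaA4:
  fixes Y :: "'a topology" and S :: "nat \<Rightarrow> 'a set"
  assumes "is_sequential_colimit Y S"
    and "\<And>n. paracompact_space (subtopology Y (S n))"
    and "\<And>n. closedin Y (S n)"
    and "\<And>n. neighbourhood_retract (S n) (subtopology Y (S (Suc n)))"
    and "\<And>n. paracompact_space (subtopology Y (S (Suc n) - S n))"
    and "\<And>n. Hausdorff_space (subtopology Y (S (Suc n) - S n))"
  shows "paracompact_space Y"
proof -
  have mono: "\<And>n. S n \<subseteq> S (Suc n)" and tY: "topspace Y = (\<Union>n. S n)"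
    and colim: "\<And>U. U \<subseteq> topspace Y \<Longrightarrow> (\<And>n. openin (subtopology Y (S n)) (U \<inter> S n)) \<Longrightarrow> openin Y U"
    using assms(1) unfolding is_sequential_colimit_def by blast+
  have monole: "S m \<subseteq> S n" if "m \<le> n" for m n
    using lift_Suc_mono_le[of S, OF mono that] .
  have Sn: "S n \<subseteq> topspace Y" for n using tY by blast
  have tS: "topspace (subtopology Y (S n)) = S n" for n using Sn[of n] by auto
  show ?thesis unfolding paracompact_space_def
  proof (intro allI impI)
    fix \<U> assume U: "(\<forall>U\<in>\<U>. openin Y U) \<and> \<Union>\<U> = topspace Y"
    have opnS: "openin (subtopology Y (S n)) (j \<inter> topspace (subtopology Y (S n)))" if "j \<in> \<U>" for j n
      unfolding tS using openin_subtopology_Int[of Y j "S n"] U that by blast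
    have covS: "topspace (subtopology Y (S n)) \<subseteq> \<Union>\<U>" for n using U tS Sn by auto
    define P where "P n \<phi> \<longleftrightarrow> ipou (subtopology Y (S n)) \<U> \<phi> \<and> isub (subtopology Y (S n)) \<U> \<phi> (\<lambda>j. j)"
      for n \<phi>
    have base: "\<exists>\<phi>. P 0 \<phi>"
      unfolding P_def by (rule para_indexed[OF assms(2)]) (use opnS covS in auto)
    have step: "\<exists>\<phi>'. P (Suc n) \<phi>' \<and> (\<forall>j\<in>\<U>. \<forall>x\<in>S n. \<phi>' j x = \<phi> j x)" if P: "P n \<phi>" for n \<phi>
    proof -
      have sub: "subtopology (subtopology Y (S (Suc n))) (S n) = subtopology Y (S n)"
        using mono[of n] by (simp add: subtopology_subtopology Int_absorb1)
      have cl: "closedin (subtopology Y (S (Suc n))) (S n)"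
        unfolding closedin_subtopology using assms(3)[of n] mono[of n] by blast
      have "\<exists>\<phi>'. ipou (subtopology Y (S (Suc n))) \<U> \<phi>' \<and> isub (subtopology Y (S (Suc n))) \<U> \<phi>' (\<lambda>j. j)
          \<and> (\<forall>j\<in>\<U>. \<forall>x\<in>S n. \<phi>' j x = \<phi> j x)"
        by (rule ext_step[OF assms(2) cl assms(4)]) (use P opnS covS sub in \<open>auto simp: P_def\<close>)
      then show ?thesis unfolding P_def by blast
    qed
    define \<psi> where "\<psi> = rec_nat (SOME \<phi>. P 0 \<phi>) (\<lambda>n \<phi>. SOME \<phi>'. P (Suc n) \<phi>' \<and> (\<forall>j\<in>\<U>. \<forall>x\<in>S n. \<phi>' j x = \<phi> j x))"
    have \<psi>0: "\<psi> 0 = (SOME \<phi>. P 0 \<phi>)" by (simp add: \<psi>_def)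
    have \<psi>S: "\<psi> (Suc n) = (SOME \<phi>'. P (Suc n) \<phi>' \<and> (\<forall>j\<in>\<U>. \<forall>x\<in>S n. \<phi>' j x = \<psi> n j x))" for n
      by (simp add: \<psi>_def)
    have P\<psi>: "P n (\<psi> n)" for n
    proof (induction n)
      case 0
      then show ?case unfolding \<psi>0 by (rule someI_ex[OF base])
    next
      case (Suc n)
      show ?case unfolding \<psi>S using someI_ex[OF step[OF Suc]] by blast
    qed
    have agS: "\<psi> (Suc n) j x = \<psi> n j x" if "j \<in> \<U>" "x \<in> S n" for n j x
    proof -
      have "\<forall>j\<in>\<U>. \<forall>x\<in>S n. \<psi> (Suc n) j x = \<psi> n j x"
        unfolding \<psi>S using someI_ex[OF step[OF P\<psi>[of n]]] by blast
      then show ?thesis using that by blast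
    qed
    have ag: "\<psi> n j x = \<psi> m j x" if "m \<le> n" "j \<in> \<U>" "x \<in> S m" for m n j x
      using that(1)
    proof (induction n rule: dec_induct)
      case base
      then show ?case by simp
    next
      case (step n)
      then show ?case using agS[OF that(2), of x n] monole[of m n] that(3) by auto
    qed
    define t where "t j x = \<psi> (LEAST n. x \<in> S n) j x" for j x
    have tSn: "t j x = \<psi> n j x" if "j \<in> \<U>" "x \<in> S n" for j x n
    proof -
      have "(LEAST n. x \<in> S n) \<le> n" using that(2) by (rule Least_le)
      moreover have "x \<in> S (LEAST n. x \<in> S n)" using that(2) by (rule LeastI)
      ultimately show ?thesis unfolding t_def using ag that(1) by metis
    qed
    have inS: "\<exists>n. x \<in> S n" if "x \<in> topspace Y" for x using that tY by blast
    have \<psi>c: "continuous_map (subtopology Y (S n)) euclideanreal (\<psi> n j)" if "j \<in> \<U>" for n j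
      using P\<psi>[of n] that unfolding P_def ipou_def by blast
    have \<psi>nn: "0 \<le> \<psi> n j x" if "j \<in> \<U>" "x \<in> S n" for n j x
      using P\<psi>[of n] that tS unfolding P_def ipou_def by blast
    have \<psi>lf: "\<exists>V. openin (subtopology Y (S n)) V \<and> x \<in> V \<and> finite {j\<in>\<U>. \<exists>y\<in>V. \<psi> n j y \<noteq> 0}"
      if "x \<in> S n" for n x
      using P\<psi>[of n] that tS unfolding P_def ipou_def by blast
    have \<psi>s: "(\<Sum>j\<in>{j\<in>\<U>. \<psi> n j x \<noteq> 0}. \<psi> n j x) = 1" if "x \<in> S n" for n x
      using P\<psi>[of n] that tS unfolding P_def ipou_def by blast
    have \<psi>sub: "subtopology Y (S n) closure_of {x\<in>S n. \<psi> n j x \<noteq> 0} \<subseteq> j" if "j \<in> \<U>" for n j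
      using P\<psi>[of n] that tS unfolding P_def isub_def by metis
    have tc: "continuous_map Y euclideanreal (t j)" if j: "j \<in> \<U>" for j
    proof -
      have "openin Y {x\<in>topspace Y. t j x \<in> Q}" if Q: "open Q" for Q
      proof (rule colim)
        fix n
        have "{x\<in>topspace Y. t j x \<in> Q} \<inter> S n = {x\<in>topspace (subtopology Y (S n)). \<psi> n j x \<in> Q}"
          using tSn[OF j] Sn[of n] tS[of n] by auto
        also have "openin (subtopology Y (S n)) \<dots>"
          by (rule openin_continuous_map_preimage[OF \<psi>c[OF j]]) (use Q in simp)
        finally show "openin (subtopology Y (S n)) ({x\<in>topspace Y. t j x \<in> Q} \<inter> S n)" .
      qed auto
      then show ?thesis by (simp add: continuous_map_def)
    qed
    obtain w where w: "ipou Y \<U> w" "isub Y \<U> w (\<lambda>j. j)"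
    proof -
      have "\<exists>w. ipou Y \<U> w \<and> isub Y \<U> w (\<lambda>j. j) \<and> (\<forall>j x. x \<notin> topspace Y \<longrightarrow> w j x = 0)"
      proof (rule dold[of \<U> Y t])
        fix j assume "j \<in> \<U>" then show "continuous_map Y euclideanreal (t j)" by (rule tc)
      next
        fix j x assume j: "j \<in> \<U>" and x: "x \<in> topspace Y"
        obtain n where n: "x \<in> S n" using inS[OF x] by blast
        show "0 \<le> t j x" using tSn[OF j n] \<psi>nn[OF j n] by simp
      next
        fix x assume x: "x \<in> topspace Y"
        obtain n where n: "x \<in> S n" using inS[OF x] by blast
        have eq: "{j\<in>\<U>. t j x \<noteq> 0} = {j\<in>\<U>. \<psi> n j x \<noteq> 0}" using tSn[OF _ n] by auto
        obtain V where V: "openin (subtopology Y (S n)) V" "x \<in> V" "finite {j\<in>\<U>. \<exists>y\<in>V. \<psi> n j y \<noteq> 0}"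
          using \<psi>lf[OF n] by blast
        have "finite {j\<in>\<U>. \<psi> n j x \<noteq> 0}" by (rule finite_subset[OF _ V(3)]) (use V in blast)
        then show "finite {j\<in>\<U>. t j x \<noteq> 0}" using eq by simp
        show "(\<Sum>j\<in>{j\<in>\<U>. t j x \<noteq> 0}. t j x) = 1"
        proof -
          have "(\<Sum>j\<in>{j\<in>\<U>. \<psi> n j x \<noteq> 0}. t j x) = (\<Sum>j\<in>{j\<in>\<U>. \<psi> n j x \<noteq> 0}. \<psi> n j x)"
            by (rule sum.cong[OF refl]) (use tSn[OF _ n] in auto)
          then show ?thesis unfolding eq using \<psi>s[OF n] by simp
        qed
      next
        fix j x assume j: "j \<in> \<U>" and x: "x \<in> topspace Y" and nz: "t j x \<noteq> 0"
        obtain n where n: "x \<in> S n" using inS[OF x] by blast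
        have "x \<in> {x\<in>S n. \<psi> n j x \<noteq> 0}" using nz tSn[OF j n] n by simp
        then have "x \<in> subtopology Y (S n) closure_of {x\<in>S n. \<psi> n j x \<noteq> 0}"
          using closure_of_subset[of "{x\<in>S n. \<psi> n j x \<noteq> 0}" "subtopology Y (S n)"] tS[of n] by blast
        then show "x \<in> j" using \<psi>sub[OF j] by blast
      qed
      then show thesis using that by blast
    qed
    show "\<exists>F. locally_finite_partition_of_unity Y F \<and> subordinate_to Y F \<U>"
      by (rule to_set[OF w]) simp
  qed
qed

end
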